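(* Let $p>3$ be a prime, $q$ a power of $p$, and $n\ge 0$ an integer with $3\mid n$. If $F_n(1,x)$ is a permutation polynomial of $\mathbb{F}_q$, then $\gcd(n,q^2-1)=3$.
   Context: For an integer $n\ge 1$, the $n$-th reversed Dickson polynomial of the third kind is $F_n(a,x)=\sum_{i=0}^{\lfloor n/2\rfloor}\frac{n-2i}{n-i}\binom{n-i}{i}(-x)^i a^{n-2i}$, where each coefficient $\frac{n-2i}{n-i}\binom{n-i}{i}$ is an integer (read in $\mathbb{F}_q$), and $F_0(a,x)=0$. A polynomial $f\in\mathbb{F}_q[x]$ is a permutation polynomial of $\mathbb{F}_q$ if $c\mapsto f(c)$ is a bijection of $\mathbb{F}_q$. *)

theory Defs
  imports "HOL-Computational_Algebra.Polynomial"
begin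

text \<open>Integer coefficient (n-2i)/(n-i) * binom(n-i,i) for 0 <= i <= n div 2, n >= 1
  (exact division; all quantities are natural numbers).\<close>
definition rd3_coeff :: "nat \<Rightarrow> nat \<Rightarrow> nat" where
  "rd3_coeff n i = ((n - 2*i) * ((n - i) choose i)) div (n - i)"

definition rev_dickson3 :: "nat \<Rightarrow> 'a::comm_ring_1 \<Rightarrow> 'a poly" where
  "rev_dickson3 n a = (if n = 0 then 0 else
     (\<Sum>i\<le>n div 2. monom (of_nat (rd3_coeff n i) * (-1)^i * a^(n - 2*i)) i))"

definition permutation_poly :: "'a::{finite,field} poly \<Rightarrow> bool" where
  "permutation_poly f \<longleftrightarrow> bij (\<lambda>c. poly f c)"

end

theory Submission
  imports Defs "HOL-Algebra.Multiplicative_Group" "HOL-Algebra.Sylow"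
begin


abbreviation cR :: "'a::field ring" where
  "cR \<equiv> \<lparr> carrier = UNIV, mult = (*), one = 1, zero = 0, add = (+) \<rparr>"

lemma cR_field: "field (cR :: 'a::field ring)"
proof -
  have cr: "cring (cR :: 'a ring)"
    apply (rule cringI)
      apply (rule abelian_groupI)
           apply (auto simp: algebra_simps)
      apply (metis add.right_inverse)
     apply (rule comm_monoidI)
        apply (auto simp: algebra_simps)
    done
  show ?thesis
    apply (rule cring.cring_fieldI[OF cr])
    apply (auto simp: Units_def)
    by (metis field_class.field_inverse mult.commute)
qed

lemma cR_pow: "x [^]\<^bsub>(cR :: 'a::field ring)\<^esub> (n::nat) = x ^ n"
  by (induction n) auto

lemma field_gen:
  shows "\<exists>g::'a::{finite,field}. g \<noteq> 0 \<and> (\<forall>x. x \<noteq> 0 \<longrightarrow> (\<exists>i. x = g ^ i))"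
proof -
  interpret field "cR :: 'a ring" by (rule cR_field)
  have fin: "finite (carrier (cR::'a ring))" by simp
  from finite_field_mult_group_has_gen[OF fin] obtain a where a: "a \<in> carrier (mult_of (cR :: 'a ring))"
    "carrier (mult_of (cR::'a ring)) = {a[^]\<^bsub>cR\<^esub> i | i::nat . i \<in> UNIV}"
    ..
  have "a \<noteq> 0" using a(1) by simp
  moreover have "\<exists>i. x = a ^ i" if "x \<noteq> 0" for x
  proof -
    have "x \<in> carrier (mult_of (cR::'a ring))" using that by simp
    hence "x \<in> {a[^]\<^bsub>cR\<^esub> i | i::nat . i \<in> UNIV}" unfolding a(2) .
    then obtain i :: nat where "x = a[^]\<^bsub>cR\<^esub> i" by blast
    thus ?thesis by (auto simp: nat_pow_mult_of cR_pow)
  qed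
  ultimately show ?thesis by blast
qed

lemma field_fermat:
  fixes x :: "'a::{finite,field}"
  assumes "x \<noteq> 0" shows "x ^ (card (UNIV::'a set) - 1) = 1"
proof -
  interpret field "cR :: 'a ring" by (rule cR_field)
  interpret G: group "mult_of (cR::'a ring)" by (rule field_mult_group)
  have "x [^]\<^bsub>mult_of (cR::'a ring)\<^esub> order (mult_of (cR::'a ring)) = \<one>\<^bsub>mult_of (cR::'a ring)\<^esub>"
    by (rule G.pow_order_eq_1) (use assms in auto)
  moreover have "order (mult_of (cR::'a ring)) = card (UNIV::'a set) - 1"
    by (simp add: order_def card_Diff_singleton)
  ultimately show ?thesis by (simp add: nat_pow_mult_of cR_pow)
qed

lemma add_pow_cR: "x [^]\<^bsub>\<lparr>carrier = H, monoid.mult = (+), one = (0::'a::semiring_1)\<rparr>\<^esub> (n::nat) = of_nat n * x"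
  by (induction n) (auto simp: algebra_simps)

lemma prime_dvd_card_char:
  fixes r :: nat
  assumes "prime r" "r dvd card (UNIV :: 'a::{finite,field} set)"
  shows "of_nat r = (0::'a)"
proof -
  interpret field "cR :: 'a ring" by (rule cR_field)
  have gr: "group (add_monoid (cR::'a ring))" by (rule a_group)
  obtain m where m: "card (UNIV :: 'a set) = r * m" using assms(2) by auto
  have om: "order (add_monoid (cR::'a ring)) = r ^ 1 * m" by (simp add: order_def m)
  have fc: "finite (carrier (add_monoid (cR::'a ring)))" by simp
  obtain H where H: "subgroup H (add_monoid (cR::'a ring))" "card H = r"
    using sylow_thm[OF assms(1) gr om fc] by auto
  have "card H > 1" using H(2) assms(1) prime_gt_1_nat by auto
  moreover have fH: "finite H" by simp
  ultimately have "\<not> (\<forall>x\<in>H. \<forall>y\<in>H. x = y)" using card_le_Suc0_iff_eq[OF fH] by simp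
  then obtain a b where ab: "a \<in> H" "b \<in> H" "a \<noteq> b" by blast
  obtain h where h: "h \<in> H" "h \<noteq> 0"
  proof (cases "a = 0")
    case True thus ?thesis using ab that by blast
  next
    case False thus ?thesis using ab that by blast
  qed
  interpret Hg: group "(add_monoid (cR::'a ring))\<lparr>carrier := H\<rparr>"
    by (rule subgroup.subgroup_is_group[OF H(1) gr])
  have "h [^]\<^bsub>(add_monoid (cR::'a ring))\<lparr>carrier := H\<rparr>\<^esub> order ((add_monoid (cR::'a ring))\<lparr>carrier := H\<rparr>)
     = \<one>\<^bsub>(add_monoid (cR::'a ring))\<lparr>carrier := H\<rparr>\<^esub>"
    by (rule Hg.pow_order_eq_1) (use h in auto)
  hence "of_nat r * h = 0" by (simp add: add_pow_cR order_def H(2))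
  thus ?thesis using h by simp
qed



lemma cc_ex: "\<exists>c::'a::{finite,field}. \<forall>t. t*t - t \<noteq> c"
proof (rule ccontr)
  assume "\<not> ?thesis"
  hence "surj (\<lambda>t::'a. t*t - t)" by (metis surj_def)
  hence "inj (\<lambda>t::'a. t*t - t)" by (rule finite_UNIV_surj_inj[OF finite_UNIV])
  moreover have "(\<lambda>t::'a. t*t - t) 0 = (\<lambda>t::'a. t*t - t) 1" by simp
  ultimately have "(0::'a) = 1" by (meson injD)
  thus False by simp
qed

definition cc :: "'a::{finite,field}" where "cc = (SOME c. \<forall>t::'a. t*t - t \<noteq> c)"

lemma cc: "t*t - t \<noteq> (cc::'a::{finite,field})"
  using someI_ex[OF cc_ex] unfolding cc_def by blast

datatype 'a ext = E (re: 'a) (im: 'a)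

definition nrm :: "'a::{finite,field} ext \<Rightarrow> 'a" where
  "nrm x = re x * re x + re x * im x - cc * im x * im x"

lemma nrm_eq_0: "nrm x = 0 \<longleftrightarrow> x = E 0 0"
proof
  assume h: "nrm x = 0"
  show "x = E 0 0"
  proof (cases "im x = 0")
    case True
    then show ?thesis using h by (cases x) (auto simp: nrm_def)
  next
    case False
    define t where "t = - re x / im x"
    have "t*t - t = (re x * re x + re x * im x) / (im x * im x)"
      using False by (simp add: t_def field_simps)
    also have "\<dots> = cc" using h False by (simp add: nrm_def field_simps)
    finally show ?thesis using cc by blast
  qed
qed (simp add: nrm_def)

instantiation ext :: ("{finite,field}") field
begin
definition "0 = E 0 0"
definition "1 = E 1 0"
definition "x + y = E (re x + re y) (im x + im y)"
definition "- x = E (- re x) (- im x)"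
definition "x - y = E (re x - re y) (im x - im y)"
definition "x * y = E (re x * re y + cc * im x * im y) (re x * im y + im x * re y + im x * im y)"
definition "inverse x = E ((re x + im x) / nrm x) (- im x / nrm x)"
definition "x div y = x * inverse (y :: 'a::{finite,field} ext)"
instance
proof
  fix a b c :: "'a ext"
  show "a * b * c = a * (b * c)" by (simp add: times_ext_def algebra_simps)
  show "a * b = b * a" by (simp add: times_ext_def algebra_simps)
  show "1 * a = a" by (simp add: times_ext_def one_ext_def)
  show "a + b + c = a + (b + c)" by (simp add: plus_ext_def algebra_simps)
  show "a + b = b + a" by (simp add: plus_ext_def algebra_simps)
  show "0 + a = a" by (simp add: plus_ext_def zero_ext_def)
  show "- a + a = 0" by (simp add: plus_ext_def uminus_ext_def zero_ext_def)
  show "a - b = a + - b" by (simp add: plus_ext_def uminus_ext_def minus_ext_def)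
  show "(a + b) * c = a * c + b * c" by (simp add: plus_ext_def times_ext_def algebra_simps)
next
  show "(0::'a ext) \<noteq> 1" by (simp add: zero_ext_def one_ext_def)
next
  fix a b :: "'a ext"
  show "a div b = a * inverse b" by (simp add: divide_ext_def)
next
  show "inverse 0 = (0::'a ext)" by (simp add: inverse_ext_def zero_ext_def nrm_def)
next
  fix a :: "'a ext"
  assume "a \<noteq> 0"
  hence "nrm a \<noteq> 0" by (simp add: nrm_eq_0 zero_ext_def)
  thus "inverse a * a = 1"
    by (simp add: inverse_ext_def times_ext_def one_ext_def field_simps) (simp add: nrm_def algebra_simps)
qed
end

instance ext :: ("{finite,field}") finite
proof
  have "(UNIV :: 'a ext set) = (\<lambda>(a,b). E a b) ` UNIV"
    by (auto simp: image_iff) (metis ext.exhaust)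
  thus "finite (UNIV :: 'a ext set)" by (metis finite_UNIV finite_imageI)
qed

lemma card_ext: "card (UNIV :: 'a::{finite,field} ext set) = card (UNIV::'a set) * card (UNIV::'a set)"
proof -
  have "bij_betw (\<lambda>(a,b). E a b) (UNIV :: ('a \<times> 'a) set) UNIV"
    by (auto simp: bij_betw_def inj_on_def image_iff) (metis ext.exhaust)
  hence "card (UNIV :: 'a ext set) = card (UNIV :: ('a \<times> 'a) set)"
    by (metis bij_betw_same_card)
  thus ?thesis by (metis UNIV_Times_UNIV card_cartesian_product)
qed

definition emb :: "'a::{finite,field} \<Rightarrow> 'a ext" where "emb t = E t 0"

lemma emb_add: "emb (a + b) = emb a + emb b" by (simp add: emb_def plus_ext_def)
lemma emb_mult: "emb (a * b) = emb a * emb b" by (simp add: emb_def times_ext_def)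
lemma emb_minus: "emb (a - b) = emb a - emb b" by (simp add: emb_def minus_ext_def)
lemma emb_uminus: "emb (- b) = - emb b" by (simp add: emb_def uminus_ext_def)
lemma emb_0: "emb 0 = 0" by (simp add: emb_def zero_ext_def)
lemma emb_1: "emb 1 = 1" by (simp add: emb_def one_ext_def)
lemma emb_inj: "emb a = emb b \<longleftrightarrow> a = b" by (simp add: emb_def)
lemma emb_power: "emb (a ^ n) = emb a ^ n" by (induction n) (simp_all add: emb_1 emb_mult)
lemma emb_of_nat: "emb (of_nat n) = of_nat n" by (induction n) (simp_all add: emb_0 emb_1 emb_add)
lemma emb_sum: "emb (sum f A) = sum (\<lambda>i. emb (f i)) A"
  by (induction A rule: infinite_finite_induct) (simp_all add: emb_0 emb_add)

definition cnj :: "'a::{finite,field} ext \<Rightarrow> 'a ext" where "cnj x = E (re x + im x) (- im x)"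

lemma cnj_add: "cnj (a + b) = cnj a + cnj b" by (simp add: cnj_def plus_ext_def)
lemma cnj_mult: "cnj (a * b) = cnj a * cnj b" by (simp add: cnj_def times_ext_def algebra_simps)
lemma cnj_1: "cnj 1 = 1" by (simp add: cnj_def one_ext_def)
lemma cnj_0: "cnj 0 = 0" by (simp add: cnj_def zero_ext_def)
lemma cnj_cnj: "cnj (cnj a) = a" by (simp add: cnj_def)
lemma cnj_inverse: "cnj (inverse a) = inverse (cnj a)"
proof (cases "a = 0")
  case True thus ?thesis by (simp add: cnj_0)
next
  case False
  hence "cnj a \<noteq> 0" by (metis cnj_0 cnj_cnj)
  moreover have "cnj a * cnj (inverse a) = 1" using False by (metis cnj_1 cnj_mult right_inverse)
  ultimately show ?thesis by (metis inverse_unique)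
qed
lemma cnj_divide: "cnj (a / b) = cnj a / cnj b" by (simp add: divide_inverse cnj_mult cnj_inverse)
lemma cnj_power: "cnj (a ^ n) = cnj a ^ n" by (induction n) (simp_all add: cnj_1 cnj_mult)
lemma mult_cnj: "a * cnj a = emb (nrm a)" by (simp add: cnj_def times_ext_def emb_def nrm_def algebra_simps)
lemma nrm_mult: "nrm (a * b) = nrm a * nrm b"
proof -
  have "emb (nrm (a*b)) = (a*cnj a) * (b * cnj b)" by (simp add: mult_cnj[symmetric] cnj_mult algebra_simps)
  thus ?thesis by (simp add: mult_cnj emb_mult[symmetric] emb_inj)
qed
lemma nrm_power: "nrm (a ^ n) = nrm a ^ n"
  by (induction n) (simp_all add: nrm_mult, simp add: nrm_def one_ext_def)
lemma cnj_fix: "cnj a = a \<Longrightarrow> a = emb (re a)"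
  by (cases a) (simp add: cnj_def emb_def)
lemma cnj_emb: "cnj (emb t) = emb t" by (simp add: cnj_def emb_def)



definition T :: "nat \<Rightarrow> 'b::comm_ring_1 \<Rightarrow> 'b" where
  "T m y = (\<Sum>i\<le>m. of_nat ((m - i) choose i) * y ^ i)"

lemma T0: "T 0 y = 1" by (simp add: T_def)
lemma T1: "T (Suc 0) y = 1" by (simp add: T_def)

lemma choose_pt: "k \<le> Suc m \<Longrightarrow> (Suc m - k) choose Suc k = ((m - k) choose Suc k) + ((m - k) choose k)"
proof (cases "k \<le> m")
  case True
  hence "Suc m - k = Suc (m - k)" by simp
  thus ?thesis by simp
next
  case False
  assume "k \<le> Suc m"
  hence "k = Suc m" using False by simp
  thus ?thesis by simp
qed

lemma T_rec: "T (Suc (Suc m)) y = T (Suc m) y + y * T m y"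
proof -
  have A: "T (Suc (Suc m)) y = 1 + (\<Sum>k\<le>Suc m. of_nat ((m - k) choose Suc k) * y^Suc k)
      + (\<Sum>k\<le>Suc m. of_nat ((m-k) choose k) * y^Suc k)"
  proof -
    have "T (Suc (Suc m)) y = 1 + (\<Sum>k\<le>Suc m. of_nat ((Suc m - k) choose Suc k) * y^Suc k)"
      unfolding T_def sum.atMost_Suc_shift by simp
    also have "(\<Sum>k\<le>Suc m. of_nat ((Suc m - k) choose Suc k) * y^Suc k)
       = (\<Sum>k\<le>Suc m. of_nat ((m - k) choose Suc k) * y^Suc k + of_nat ((m-k) choose k) * y^Suc k)"
      by (intro sum.cong refl) (simp add: choose_pt algebra_simps)
    finally show ?thesis by (simp add: sum.distrib add.assoc)
  qed
  have B0: "T (Suc m) y = 1 + (\<Sum>k\<le>m. of_nat ((m - k) choose Suc k) * y^Suc k)"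
    unfolding T_def by (subst sum.atMost_Suc_shift) simp
  have B1: "(\<Sum>k\<le>Suc m. of_nat ((m - k) choose Suc k) * y^Suc k) = (\<Sum>k\<le>m. of_nat ((m - k) choose Suc k) * y^Suc k)"
    by (subst sum.atMost_Suc) simp
  have B: "T (Suc m) y = 1 + (\<Sum>k\<le>Suc m. of_nat ((m - k) choose Suc k) * y^Suc k)"
    using B0 B1 by simp
  have C: "(\<Sum>k\<le>Suc m. of_nat ((m-k) choose k) * y^Suc k) = y * T m y"
    unfolding T_def by (simp add: sum_distrib_left algebra_simps)
  show ?thesis using A B C by simp
qed

lemma T_uv:
  fixes u v :: "'b::comm_ring_1"
  assumes "u + v = 1"
  shows "(u - v) * T m (-(u*v)) = u^(Suc m) - v^(Suc m)"
proof -
  have "(u - v) * T m (-(u*v)) = u^(Suc m) - v^(Suc m) \<and>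
        (u - v) * T (Suc m) (-(u*v)) = u^(Suc (Suc m)) - v^(Suc (Suc m))"
  proof (induction m)
    case 0
    have "u*u - v*v = (u - v) * (u + v)" by (simp add: algebra_simps)
    thus ?case using assms by (simp add: T0 T1 power2_eq_square)
  next
    case (Suc m)
    have "(u - v) * T (Suc (Suc m)) (-(u*v))
        = (u - v) * T (Suc m) (-(u*v)) - u*v*((u - v) * T m (-(u*v)))"
      by (simp add: T_rec algebra_simps)
    also have "\<dots> = (u + v) * (u^(Suc (Suc m)) - v^(Suc (Suc m))) - u*v*(u^(Suc m) - v^(Suc m))"
      using Suc.IH assms by simp
    also have "\<dots> = u^(Suc (Suc (Suc m))) - v^(Suc (Suc (Suc m)))" by (simp add: algebra_simps)
    finally show ?case using Suc.IH by simp
  qed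
  thus ?thesis by simp
qed

lemma rd3_0: "n \<ge> 1 \<Longrightarrow> rd3_coeff n 0 = 1" by (simp add: rd3_coeff_def)

lemma rd3_pos:
  assumes "1 \<le> i" "2*i \<le> n"
  shows "rd3_coeff n i = ((n - i) choose i) - ((n - 1 - i) choose (i - 1))"
    and "((n - 1 - i) choose (i - 1)) \<le> ((n - i) choose i)"
proof -
  define m where "m = n - i"
  have mi: "i \<le> m" "1 \<le> m" using assms by (auto simp: m_def)
  obtain m' where m': "m = Suc m'" using mi by (cases m) auto
  obtain i' where i': "i = Suc i'" using assms by (cases i) auto
  note mm = m' i'
  have key: "i * (m choose i) = m * ((m - 1) choose (i - 1))"
    using Suc_times_binomial[of i' m'] mm by simp
  have e: "n - 1 - i = m - 1" by (simp add: m_def)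
  have le: "((m - 1) choose (i - 1)) \<le> (m choose i)"
  proof -
    have "m * ((m - 1) choose (i - 1)) \<le> m * (m choose i)"
      using key mi by (metis mult_le_mono1)
    thus ?thesis using mi by simp
  qed
  have "(n - 2*i) * (m choose i) = m * (m choose i) - i * (m choose i)"
    by (simp add: m_def diff_mult_distrib)
  also have "\<dots> = m * ((m choose i) - ((m - 1) choose (i - 1)))"
    by (simp add: key diff_mult_distrib2)
  finally have "rd3_coeff n i = (m * ((m choose i) - ((m - 1) choose (i - 1)))) div m"
    by (simp add: rd3_coeff_def m_def)
  also have "\<dots> = (m choose i) - ((m - 1) choose (i - 1))" using mi by simp
  finally show "rd3_coeff n i = ((n - i) choose i) - ((n - 1 - i) choose (i - 1))"
    by (simp add: e m_def)
  show "((n - 1 - i) choose (i - 1)) \<le> ((n - i) choose i)" using le e m_def by simp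
qed

definition bb :: "nat \<Rightarrow> nat \<Rightarrow> nat" where
  "bb n i = (if i = 0 then 0 else (n - 1 - i) choose (i - 1))"

lemma coeff_split:
  assumes "n \<ge> 2" "i \<le> n"
  shows "(of_nat (if i \<le> n div 2 then rd3_coeff n i else 0) :: 'b::comm_ring_1)
        = of_nat ((n - i) choose i) - of_nat (bb n i)"
proof (cases "i \<le> n div 2")
  case True
  show ?thesis
  proof (cases "i = 0")
    case True thus ?thesis using assms by (simp add: rd3_0 bb_def)
  next
    case False
    have ii: "1 \<le> i" "2*i \<le> n" using \<open>i \<le> n div 2\<close> False by auto
    show ?thesis using rd3_pos[OF ii(1) ii(2)] True False by (simp add: bb_def of_nat_diff)
  qed
next
  case False
  hence "n - i < i" by auto
  hence a: "(n - i) choose i = 0" by simp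
  have "n - 1 - i < i - 1" using False assms by auto
  hence b: "bb n i = 0" using False by (simp add: bb_def)
  show ?thesis using False by (simp only: a b if_False of_nat_0 diff_self)
qed

lemma rd3_sum:
  assumes "n \<ge> 1"
  shows "(\<Sum>i\<le>n div 2. of_nat (rd3_coeff n i) * y ^ i) = T (n - 1) (y :: 'b::comm_ring_1)"
proof (cases "n = 1")
  case True thus ?thesis by (simp add: rd3_0 T0)
next
  case False
  then obtain k where k: "n = Suc (Suc k)" using assms by (metis One_nat_def Suc_le_D not_less_eq_eq le_Suc_eq)
  have n2: "n \<ge> 2" using k by simp
  have "(\<Sum>i\<le>n div 2. of_nat (rd3_coeff n i) * y ^ i)
      = (\<Sum>i\<le>n. of_nat (if i \<le> n div 2 then rd3_coeff n i else 0) * y ^ i)"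
    by (rule sum.mono_neutral_cong_left) auto
  also have "\<dots> = (\<Sum>i\<le>n. of_nat ((n - i) choose i) * y ^ i - of_nat (bb n i) * y^i)"
  proof (intro sum.cong refl)
    fix i assume "i \<in> {..n}"
    hence "i \<le> n" by simp
    from coeff_split[OF n2 this, where 'b='b]
    show "of_nat (if i \<le> n div 2 then rd3_coeff n i else 0) * y ^ i = of_nat ((n - i) choose i) * y ^ i - of_nat (bb n i) * y^i"
      by (simp only: left_diff_distrib)
  qed
  also have "\<dots> = T n y - (\<Sum>i\<le>n. of_nat (bb n i) * y^i)"
    by (simp add: sum_subtractf T_def)
  also have "(\<Sum>i\<le>n. of_nat (bb n i) * y^i) = (\<Sum>j\<le>Suc k. of_nat ((k - j) choose j) * y^Suc j)"
    unfolding k sum.atMost_Suc_shift by (simp add: bb_def)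
  also have "\<dots> = y * T k y"
    unfolding T_def by (simp add: sum_distrib_left algebra_simps)
  finally show ?thesis using k by (simp add: T_rec)
qed

lemma poly_rd3:
  assumes "n \<ge> 1"
  shows "poly (rev_dickson3 n (1::'b::comm_ring_1)) x = T (n - 1) (- x)"
proof -
  have "poly (rev_dickson3 n (1::'b)) x = (\<Sum>i\<le>n div 2. of_nat (rd3_coeff n i) * (-1)^i * 1^(n - 2*i) * x ^ i)"
    using assms by (simp add: rev_dickson3_def poly_sum poly_monom)
  also have "\<dots> = (\<Sum>i\<le>n div 2. of_nat (rd3_coeff n i) * (-x) ^ i)"
    by (intro sum.cong refl) (simp add: power_minus[of x])
  finally show ?thesis using rd3_sum[OF assms] by simp
qed



lemma pow_mod_order:
  fixes g :: "'b::comm_ring_1"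
  assumes "g ^ e = 1"
  shows "g ^ i = g ^ (i mod e)"
proof -
  have "g ^ i = g ^ (e * (i div e) + i mod e)" by simp
  also have "\<dots> = (g ^ e) ^ (i div e) * g ^ (i mod e)" by (simp only: power_add power_mult)
  finally show ?thesis using assms by simp
qed

lemma card_ge2: "card (UNIV :: 'b::{finite,field} set) \<ge> 2"
proof -
  have "{0, 1} \<subseteq> (UNIV :: 'b set)" by simp
  hence "card {0, 1::'b} \<le> card (UNIV :: 'b set)" by (intro card_mono) auto
  thus ?thesis by simp
qed

lemma gen_roots:
  fixes g :: "'b::{finite,field}"
  assumes gen: "\<forall>x. x \<noteq> 0 \<longrightarrow> (\<exists>i. x = g^i)" and g0: "g \<noteq> 0"
    and d: "d dvd (card (UNIV::'b set) - 1)" "d > 0"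
  shows "card ((\<lambda>j. g^(j * ((card (UNIV::'b set) - 1) div d))) ` {..<d}) = d"
    and "\<forall>w\<in>(\<lambda>j. g^(j * ((card (UNIV::'b set) - 1) div d))) ` {..<d}. w^d = 1"
proof -
  define N where "N = card (UNIV::'b set) - 1"
  define m where "m = N div d"
  have N0: "N > 0" using card_ge2[where 'b='b] by (simp add: N_def)
  have dm: "d * m = N" using d by (simp add: m_def N_def)
  have m0: "m > 0" using dm N0 by (metis gr0I mult_0_right)
  have gN: "g ^ N = 1" using field_fermat[OF g0] by (simp add: N_def)
  show "\<forall>w\<in>(\<lambda>j. g^(j * ((card (UNIV::'b set) - 1) div d))) ` {..<d}. w^d = 1"
  proof
    fix w assume "w \<in> (\<lambda>j. g^(j * ((card (UNIV::'b set) - 1) div d))) ` {..<d}"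
    then obtain j where "w = g^(j * m)" by (auto simp: m_def N_def)
    hence "w^d = (g^N)^j" by (simp flip: power_mult dm) (simp add: ac_simps)
    thus "w^d = 1" using gN by simp
  qed
  have "inj_on (\<lambda>j. g^(j * m)) {..<d}"
  proof (rule ccontr)
    assume "\<not> ?thesis"
    then obtain j1 j2 where j: "j1 < d" "j2 < d" "j1 < j2" "g^(j1*m) = g^(j2*m)"
      unfolding inj_on_def by (metis lessThan_iff linorder_neqE_nat)
    define e where "e = (j2 - j1) * m"
    have e0: "e > 0" using j m0 by (simp add: e_def)
    have eN: "e < N"
    proof -
      have "(j2 - j1) < d" using j by simp
      hence "(j2 - j1) * m < d * m" using m0 by simp
      thus ?thesis using dm by (simp add: e_def)
    qed
    have "g^(j2*m) = g^(j1*m) * g^e"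
      by (simp add: e_def flip: power_add) (metis j(3) add_diff_inverse_nat diff_mult_distrib less_imp_le_nat mult_le_mono1 not_less)
    hence ge: "g ^ e = 1" using j(4) g0 by simp
    have "UNIV - {0} \<subseteq> (\<lambda>i. g^i) ` {..<e}"
    proof
      fix x assume "x \<in> UNIV - {(0::'b)}"
      then obtain i where "x = g^i" using gen by auto
      hence "x = g^(i mod e)" using pow_mod_order[OF ge] by simp
      thus "x \<in> (\<lambda>i. g^i) ` {..<e}" using e0 by auto
    qed
    hence "card (UNIV - {0::'b}) \<le> card ((\<lambda>i. g^i) ` {..<e})" by (intro card_mono) auto
    also have "\<dots> \<le> e" using card_image_le[of "{..<e}" "\<lambda>i. g^i"] by simp
    finally have "N \<le> e" by (simp add: N_def card_Diff_singleton)
    thus False using eN by simp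
  qed
  thus "card ((\<lambda>j. g^(j * ((card (UNIV::'b set) - 1) div d))) ` {..<d}) = d"
    by (simp add: card_image m_def N_def)
qed



lemma emb_T: "emb (T m y) = T m (emb y)"
  by (simp add: T_def emb_sum emb_mult emb_of_nat emb_power)

lemma X_zero:
  fixes w :: "'a::{finite,field} ext"
  assumes "w \<noteq> 0" "w \<noteq> 1" "w \<noteq> -1" "w^n = 1" "n \<ge> 1" "cnj w = w \<or> nrm w = 1"
  shows "\<exists>x. w / (1+w)^2 = emb x \<and> poly (rev_dickson3 n (1::'a)) x = 0"
proof -
  have w1: "1 + w \<noteq> 0" using assms(3) by (metis add_eq_0_iff)
  have c: "cnj (w/(1+w)^2) = cnj w / (1 + cnj w)^2" by (simp add: cnj_divide cnj_add cnj_1 cnj_power)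
  have cw: "cnj (w/(1+w)^2) = w/(1+w)^2"
  proof (cases "cnj w = w")
    case True thus ?thesis using c by simp
  next
    case False
    hence "nrm w = 1" using assms(6) by simp
    hence "w * cnj w = 1" by (simp add: mult_cnj emb_1)
    hence ci: "cnj w = inverse w" by (metis inverse_unique)
    have "inverse w / (1 + inverse w)^2 = w / (1+w)^2"
      using assms(1) w1 by (simp add: field_simps power2_eq_square)
    thus ?thesis using c ci by simp
  qed
  define x where "x = re (w/(1+w)^2)"
  have xe: "w/(1+w)^2 = emb x" unfolding x_def by (rule cnj_fix[OF cw])
  define u where "u = w / (1+w)"
  define v where "v = 1 / (1+w)"
  have uv1: "u + v = 1" using w1 by (simp add: u_def v_def field_simps)
  have uv: "u * v = w/(1+w)^2" using w1 by (simp add: u_def v_def field_simps power2_eq_square)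
  have "u - v = (w - 1) / (1 + w)" by (simp add: u_def v_def diff_divide_distrib)
  moreover have "w - 1 \<noteq> 0" using assms(2) by simp
  ultimately have umv: "u - v \<noteq> 0" using w1 by simp
  have un: "u^n = v^n" using assms(4) by (simp add: u_def v_def power_divide)
  have "(u - v) * T (n - 1) (-(u*v)) = u^(Suc (n-1)) - v^(Suc (n-1))" by (rule T_uv[OF uv1])
  hence "(u - v) * T (n - 1) (-(u*v)) = 0" using un assms(5) by simp
  hence t0: "T (n - 1) (-(u*v)) = 0" using umv by simp
  have "emb (T (n - 1) (-x)) = T (n - 1) (-(u*v))" by (simp add: emb_T emb_uminus uv xe)
  hence "T (n - 1) (-x) = 0" using t0 by (metis emb_0 emb_inj)
  moreover have "poly (rev_dickson3 n (1::'a)) x = T (n - 1) (-x)" by (rule poly_rd3[OF assms(5)])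
  ultimately have "poly (rev_dickson3 n (1::'a)) x = 0" by simp
  thus ?thesis using xe by blast
qed

lemma X_inj:
  fixes w1 w2 :: "'b::field"
  assumes "1 + w1 \<noteq> 0" "1 + w2 \<noteq> 0" "w1 / (1+w1)^2 = w2 / (1+w2)^2"
  shows "w1 = w2 \<or> w1 * w2 = 1"
proof -
  have "w1 * (1+w2)^2 = w2 * (1+w1)^2" using assms by (simp add: field_simps)
  hence "(w1 - w2) * (1 - w1 * w2) = 0" by (simp add: algebra_simps power2_eq_square)
  thus ?thesis by auto
qed



theorem theorem3p5:
  fixes p n :: nat
  assumes "prime p" and "p > 3"
    and "CHAR('a::{finite,field}) = p"
    and "3 dvd n"
    and "permutation_poly (rev_dickson3 n (1::'a))"
  shows "gcd n (card (UNIV :: 'a set) ^ 2 - 1) = 3"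
proof -
  define q where "q = card (UNIV::'a set)"
  have q2: "q \<ge> 2" unfolding q_def by (rule card_ge2)
  have nzc: "of_nat r \<noteq> (0::'a)" if "r = 2 \<or> r = 3" for r
  proof
    assume "of_nat r = (0::'a)"
    hence "p dvd r" using assms(3) by (simp add: of_nat_eq_0_iff_char_dvd)
    hence "p \<le> r" using that by (auto dest: dvd_imp_le)
    thus False using that assms(2) by auto
  qed
  have qodd: "\<not> 2 dvd q"
    using prime_dvd_card_char[of 2, where 'a='a] nzc[of 2] by (auto simp: q_def)
  have q3: "\<not> 3 dvd q"
    using prime_dvd_card_char[of 3, where 'a='a] nzc[of 3] by (auto simp: q_def)
  have m1: "(-1::'a ext) \<noteq> 1"
  proof
    assume "(-1::'a ext) = 1"
    hence "emb (-1) = emb (1::'a)" by (simp add: emb_uminus emb_1)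
    hence "(-1::'a) = 1" by (simp add: emb_inj)
    hence "(of_nat 2::'a) = 0" by (metis add_eq_0_iff one_add_one of_nat_numeral)
    thus False using nzc[of 2] by simp
  qed
  have inj: "inj (\<lambda>c. poly (rev_dickson3 n (1::'a)) c)"
    using assms(5) by (simp add: permutation_poly_def bij_is_inj)
  have n0: "n \<noteq> 0"
  proof
    assume "n = 0"
    hence "inj (\<lambda>c::'a. 0::'a)" using inj by (simp add: rev_dickson3_def)
    thus False by (metis injD zero_neq_one)
  qed
  hence n1: "n \<ge> 1" by simp
  obtain g :: 'a where g: "g \<noteq> 0" "\<forall>x. x \<noteq> 0 \<longrightarrow> (\<exists>i. x = g^i)" using field_gen by blast
  obtain a :: "'a ext" where a: "a \<noteq> 0" "\<forall>x. x \<noteq> 0 \<longrightarrow> (\<exists>i. x = a^i)" using field_gen by blast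
  define g1 where "g1 = gcd n (q - 1)"
  define g2 where "g2 = gcd n (q + 1)"
  have qq: "q * q - 1 = (q - 1) * (q + 1)" using q2 by (cases q) (simp_all add: algebra_simps)
  have cK: "card (UNIV :: 'a ext set) - 1 = q * q - 1" by (simp add: card_ext q_def)
  have g1d: "g1 dvd card (UNIV::'a set) - 1" "g1 > 0" using n0 by (auto simp: g1_def q_def)
  have g2q: "g2 dvd q + 1" "g2 > 0" using n0 by (auto simp: g2_def)
  have g2d: "g2 dvd card (UNIV::'a ext set) - 1" by (simp only: cK qq) (rule dvd_mult[OF g2q(1)])
  define SA where "SA = (\<lambda>j. g^(j * ((card (UNIV::'a set) - 1) div g1))) ` {..<g1}"
  define B where "B = (\<lambda>j. a^(j * ((card (UNIV::'a ext set) - 1) div g2))) ` {..<g2}"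
  define A where "A = emb ` SA"
  have cSA: "card SA = g1" and rSA: "\<forall>w\<in>SA. w^g1 = 1"
    using gen_roots[OF g(2) g(1) g1d] unfolding SA_def by auto
  have cB: "card B = g2" and rB: "\<forall>w\<in>B. w^g2 = 1"
    using gen_roots[OF a(2) a(1) g2d g2q(2)] unfolding B_def by auto
  have cA: "card A = g1" unfolding A_def using cSA by (simp add: card_image inj_on_def emb_inj)
  have g1n: "g1 dvd n" and g2n: "g2 dvd n" by (auto simp: g1_def g2_def)
  have powA: "w^g1 = 1" if wA: "w \<in> A" for w
  proof -
    obtain t where "t \<in> SA" "w = emb t" using wA A_def by auto
    thus ?thesis using rSA by (simp add: emb_power[symmetric] emb_1)
  qed
  have propA: "w \<noteq> 0 \<and> w^n = 1 \<and> (cnj w = w \<or> nrm w = 1)" if wA: "w \<in> A" for w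
  proof -
    obtain t where t: "t \<in> SA" "w = emb t" using wA A_def by auto
    have "w^g1 = 1" by (rule powA[OF wA])
    moreover obtain c where "n = g1 * c" using g1n by auto
    ultimately have "w^n = 1" by (simp add: power_mult)
    moreover have "w \<noteq> 0" using \<open>w^g1 = 1\<close> g1d(2) by (auto simp: power_0_left)
    moreover have "cnj w = w" using t by (simp add: cnj_emb)
    ultimately show ?thesis by simp
  qed
  have nrma: "nrm a ^ (q - 1) = 1"
  proof -
    have "nrm a \<noteq> 0" using a(1) by (simp add: nrm_eq_0 zero_ext_def)
    thus ?thesis using field_fermat by (simp add: q_def)
  qed
  have propB: "w \<noteq> 0 \<and> w^n = 1 \<and> (cnj w = w \<or> nrm w = 1)" if wB: "w \<in> B" for w
  proof -
    obtain j where j: "w = a^(j * ((card (UNIV::'a ext set) - 1) div g2))" using wB B_def by auto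
    have "(card (UNIV::'a ext set) - 1) div g2 = (q - 1) * ((q + 1) div g2)"
      by (simp only: cK qq div_mult_swap[OF g2q(1)])
    hence "nrm w = (nrm a ^ (q - 1)) ^ (j * ((q + 1) div g2))"
      by (simp add: j nrm_power power_mult[symmetric] ac_simps)
    hence "nrm w = 1" using nrma by simp
    moreover have "w^g2 = 1" using rB wB by auto
    moreover obtain c where "n = g2 * c" using g2n by auto
    ultimately have "w^n = 1" by (simp add: power_mult)
    moreover have "w \<noteq> 0" using \<open>w^g2 = 1\<close> g2q(2) by (auto simp: power_0_left)
    ultimately show ?thesis using \<open>nrm w = 1\<close> by simp
  qed
  have propAB: "w \<noteq> 0 \<and> w^n = 1 \<and> (cnj w = w \<or> nrm w = 1)" if "w \<in> A \<union> B" for w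
    using propA propB that by blast
  define W where "W = (A \<union> B) - {1, -1}"
  have keyW: "w2 = w1 \<or> w2 = inverse w1" if "w1 \<in> W" "w2 \<in> W" for w1 w2
  proof -
    have p1: "w1 \<noteq> 0" "w1^n = 1" "cnj w1 = w1 \<or> nrm w1 = 1" "w1 \<noteq> 1" "w1 \<noteq> -1"
      using propAB that(1) by (auto simp: W_def)
    have p2: "w2 \<noteq> 0" "w2^n = 1" "cnj w2 = w2 \<or> nrm w2 = 1" "w2 \<noteq> 1" "w2 \<noteq> -1"
      using propAB that(2) by (auto simp: W_def)
    obtain x1 where x1: "w1 / (1+w1)^2 = emb x1" "poly (rev_dickson3 n (1::'a)) x1 = 0"
      using X_zero[OF p1(1) p1(4) p1(5) p1(2) n1 p1(3)] by blast
    obtain x2 where x2: "w2 / (1+w2)^2 = emb x2" "poly (rev_dickson3 n (1::'a)) x2 = 0"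
      using X_zero[OF p2(1) p2(4) p2(5) p2(2) n1 p2(3)] by blast
    have "x1 = x2" using inj x1(2) x2(2) by (metis injD)
    hence "w1 / (1+w1)^2 = w2 / (1+w2)^2" using x1 x2 by simp
    moreover have "1 + w1 \<noteq> 0" "1 + w2 \<noteq> 0" using p1(5) p2(5) by (metis add_eq_0_iff)+
    ultimately have "w1 = w2 \<or> w1 * w2 = 1" using X_inj by blast
    thus ?thesis by (metis inverse_unique)
  qed
  have cW: "card W \<le> 2"
  proof (cases "W = {}")
    case True thus ?thesis by simp
  next
    case False
    then obtain w0 where w0: "w0 \<in> W" by blast
    hence "W \<subseteq> {w0, inverse w0}" using keyW by blast
    hence "card W \<le> card {w0, inverse w0}" by (intro card_mono) auto
    also have "\<dots> \<le> 2" by (simp add: card_insert_if)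
    finally show ?thesis .
  qed
  have cAB: "card (A \<union> B) - 2 \<le> card W"
  proof -
    have "card (A \<union> B) - card {1, -1::'a ext} \<le> card W"
      unfolding W_def by (rule diff_card_le_card_Diff) simp
    moreover have "card {1, -1::'a ext} \<le> 2" by (simp add: card_insert_if)
    ultimately show ?thesis by linarith
  qed
  have finAB: "finite A" "finite B" by auto
  have geA: "card A \<le> card (A \<union> B)" and geB: "card B \<le> card (A \<union> B)"
    by (auto intro: card_mono finAB)
  have q3c: "3 dvd q - 1 \<or> 3 dvd q + 1" using q3 q2 by presburger
  have g3: "3 dvd g1 \<or> 3 dvd g2" using q3c assms(4) by (auto simp: g1_def g2_def)
  have q1: "q - 1 = q - 1" ..
  show ?thesis
  proof (cases "even n")
    case True
    have "2 dvd q - 1" "2 dvd q + 1" using qodd q2 by presburger+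
    hence "2 dvd g1" "2 dvd g2" using True by (auto simp: g1_def g2_def)
    hence "6 dvd g1 \<or> 6 dvd g2" using g3 by presburger
    hence "g1 \<ge> 6 \<or> g2 \<ge> 6" using g1d(2) g2q(2) by (auto dest: dvd_imp_le)
    hence "card (A \<union> B) \<ge> 6" using geA geB cA cB by linarith
    thus ?thesis using cAB cW by linarith
  next
    case False
    have nm1: "-1 \<notin> A \<union> B"
    proof
      assume "-1 \<in> A \<union> B"
      hence "(-1::'a ext)^n = 1" using propAB by blast
      hence "(-1::'a ext) = 1" using False by simp
      thus False using m1 by simp
    qed
    hence "W = (A \<union> B) - {1}" by (auto simp: W_def)
    hence cW1: "card (A \<union> B) - 1 \<le> card W" using diff_card_le_card_Diff[of "{1::'a ext}" "A \<union> B"] by simp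
    have cop: "gcd g1 g2 = 1"
    proof -
      define d where "d = gcd g1 g2"
      have "d dvd q - 1" "d dvd q + 1" by (auto simp: d_def g1_def g2_def intro: dvd_trans)
      hence "d dvd (q + 1) - (q - 1)" by (rule dvd_diff_nat[rotated])
      moreover have "(q + 1) - (q - 1) = 2" using q2 by simp
      ultimately have "d dvd 2" by simp
      moreover have "d dvd n" by (auto simp: d_def g1_def intro: dvd_trans)
      hence "odd d" using False by (auto intro: dvd_trans)
      ultimately show ?thesis unfolding d_def[symmetric]
        by (metis dvd_antisym dvd_refl nat_dvd_1_iff_1 prime_nat_iff two_is_prime_nat) 
    qed
    have AiB: "A \<inter> B \<subseteq> {1}"
    proof
      fix w assume w: "w \<in> A \<inter> B"
      hence e1: "w^g1 = 1" using powA by auto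
      have e2: "w^g2 = 1" using w rB by auto
      obtain x y where xy: "g1 * x = g2 * y + gcd g1 g2" using bezout_nat[of g1 g2] g1d(2) by auto
      have "w = w^(g2*y + 1)" using e2 by (simp add: power_mult)
      also have "\<dots> = w^(g1*x)" using xy cop by simp
      also have "\<dots> = 1" using e1 by (simp add: power_mult)
      finally show "w \<in> {1}" by simp
    qed
    have "card (A \<inter> B) \<le> 1" using card_mono[OF _ AiB] by simp
    moreover have "card A + card B = card (A \<union> B) + card (A \<inter> B)" by (rule card_Un_Int[OF finAB])
    ultimately have "g1 + g2 \<le> 4" using cA cB cW1 cW by linarith
    hence "(g1 = 3 \<and> g2 = 1) \<or> (g1 = 1 \<and> g2 = 3)" using g3 g1d(2) g2q(2)
      by (auto elim!: dvdE)
    thus ?thesis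
    proof
      assume h: "g1 = 3 \<and> g2 = 1"
      hence "coprime n (q + 1)" by (simp add: g2_def coprime_iff_gcd_eq_1)
      hence "gcd n ((q - 1) * (q + 1)) = gcd n (q - 1)" by (rule gcd_mult_right_right_cancel)
      thus ?thesis using h qq by (simp add: g1_def q_def power2_eq_square)
    next
      assume h: "g1 = 1 \<and> g2 = 3"
      hence "coprime n (q - 1)" by (simp add: g1_def coprime_iff_gcd_eq_1)
      hence "gcd n ((q - 1) * (q + 1)) = gcd n (q + 1)" by (rule gcd_mult_right_left_cancel)
      thus ?thesis using h qq by (simp add: g2_def q_def power2_eq_square)
    qed
  qed
qed


end
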